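(* For every $n\ge 3$, the sun $S_n$ is not $(a,d)$-distance antimagic for any integers $a$ and $d\ge 0$.
   Context: The sun $S_n$ ($n\ge3$) is the graph on $2n$ vertices obtained from a cycle $x_1x_2\cdots x_n x_1$ by attaching a new pendant vertex $y_i$ adjacent only to $x_i$, for each $i=1,\dots,n$. For a graph $G=(V,E)$ with $v=|V|$ and a bijection $f:V\to\{1,\dots,v\}$, the vertex-weight of $x$ is $w(x)=\sum_{y\in N(x)}f(y)$ with $N(x)$ the set of neighbours of $x$. For integers $a$ and $d\ge0$, $f$ is an $(a,d)$-distance antimagic labeling if the multiset of vertex-weights equals $\{a,a+d,\dots,a+(v-1)d\}$; $G$ is $(a,d)$-distance antimagic if it admits such a labeling. *)

theory Defs
  imports Main "HOL-Library.Multiset"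
begin

text \<open>Graphs given by a finite vertex set V and a symmetric adjacency relation E.\<close>

definition nbhd :: "'a set \<Rightarrow> ('a \<Rightarrow> 'a \<Rightarrow> bool) \<Rightarrow> 'a \<Rightarrow> 'a set" where
  "nbhd V E x = {y \<in> V. E x y}"

definition vertex_weight :: "'a set \<Rightarrow> ('a \<Rightarrow> 'a \<Rightarrow> bool) \<Rightarrow> ('a \<Rightarrow> int) \<Rightarrow> 'a \<Rightarrow> int" where
  "vertex_weight V E f x = (\<Sum>y\<in>nbhd V E x. f y)"

definition distance_antimagic_labeling ::
  "'a set \<Rightarrow> ('a \<Rightarrow> 'a \<Rightarrow> bool) \<Rightarrow> int \<Rightarrow> int \<Rightarrow> ('a \<Rightarrow> int) \<Rightarrow> bool" where
  "distance_antimagic_labeling V E a d f \<longleftrightarrow>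
     bij_betw f V {1..int (card V)} \<and>
     image_mset (vertex_weight V E f) (mset_set V) =
       mset (map (\<lambda>i. a + int i * d) [0..<card V])"

definition distance_antimagic :: "'a set \<Rightarrow> ('a \<Rightarrow> 'a \<Rightarrow> bool) \<Rightarrow> int \<Rightarrow> int \<Rightarrow> bool" where
  "distance_antimagic V E a d \<longleftrightarrow> (\<exists>f. distance_antimagic_labeling V E a d f)"

text \<open>The sun S_n: cycle vertices X 0 .. X (n-1) (i.e. x_1..x_n), pendant vertices Y i adjacent to X i.\<close>

datatype sun_vertex = X nat | Y nat

definition sun_V :: "nat \<Rightarrow> sun_vertex set" where
  "sun_V n = X ` {..<n} \<union> Y ` {..<n}"

fun sun_E :: "nat \<Rightarrow> sun_vertex \<Rightarrow> sun_vertex \<Rightarrow> bool" where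
  "sun_E n (X i) (X j) \<longleftrightarrow> i < n \<and> j < n \<and> (j = (i + 1) mod n \<or> i = (j + 1) mod n)"
| "sun_E n (X i) (Y j) \<longleftrightarrow> i < n \<and> i = j"
| "sun_E n (Y i) (X j) \<longleftrightarrow> i < n \<and> i = j"
| "sun_E n (Y i) (Y j) \<longleftrightarrow> False"

end

theory Submission imports Defs begin

lemma gauss2: "2 * (\<Sum>k<m. int k) = int m * (int m - 1)"
  by (induction m) (auto simp: algebra_simps)

lemma sum_card_lb:
  fixes K :: "nat set"
  assumes "finite K"
  shows "card K * (card K - 1) \<le> 2 * \<Sum>K"
  using assms
proof (induction "card K" arbitrary: K)
  case 0 then show ?case by simp
next
  case (Suc c)
  then have ne: "K \<noteq> {}" by auto
  define m where "m = Max K"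
  have mK: "m \<in> K" using Suc ne m_def by simp
  have "K \<subseteq> {0..m}" using Suc m_def by auto
  then have "card K \<le> card {0..m}" by (intro card_mono) auto
  then have cm: "Suc c \<le> Suc m" using Suc(2) by simp
  have c: "card (K - {m}) = c" using Suc(2,3) mK by simp
  have fin2: "finite (K - {m})" using Suc(3) by simp
  have IH: "c * (c - 1) \<le> 2 * \<Sum>(K - {m})" using Suc(1)[OF c[symmetric] fin2] c by simp
  have s: "\<Sum>K = m + \<Sum>(K - {m})" using Suc(3) mK by (simp add: sum.remove)
  have e: "Suc c * c = c * (c - 1) + 2 * c" by (cases c) auto
  have "card K * (card K - 1) = Suc c * c" using Suc(2) by simp
  also have "\<dots> \<le> 2 * \<Sum>(K - {m}) + 2 * m" using e IH cm by linarith
  finally show ?case using s by linarith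
qed

lemma modsuc: "(i + 1) mod n = (if i + 1 = n then 0 else i + 1)" if "i < (n::nat)"
proof (cases "i + 1 = n")
  case False then have "i + 1 < n" using that by linarith
  then show ?thesis by simp
qed simp

lemma sunE_XX: "i < n \<Longrightarrow> j < n \<Longrightarrow> sun_E n (X i) (X j) \<longleftrightarrow>
   j = (if i + 1 = n then 0 else i + 1) \<or> j = (if i = 0 then n - 1 else i - 1)"
  by (simp only: sun_E.simps modsuc[of i n] modsuc[of j n]) (auto split: if_splits)

theorem mainTheorem7:
  fixes n :: nat and a d :: int
  assumes "n \<ge> 3" and "d \<ge> 0"
  shows "\<not> distance_antimagic (sun_V n) (sun_E n) a d"
proof
  assume "distance_antimagic (sun_V n) (sun_E n) a d"
  then obtain f where lab: "distance_antimagic_labeling (sun_V n) (sun_E n) a d f"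
    unfolding distance_antimagic_def by blast
  define V where "V = sun_V n"
  define E where "E = sun_E n"
  define w where "w = vertex_weight V E f"
  define XS where "XS = X ` {..<n}"
  define YS where "YS = Y ` {..<n}"
  define s where "s = (\<lambda>i::nat. if i + 1 = n then 0 else i + 1)"
  define p where "p = (\<lambda>i::nat. if i = 0 then n - 1 else i - 1)"
  have VXY: "V = XS \<union> YS" unfolding V_def XS_def YS_def sun_V_def by simp
  have disj: "XS \<inter> YS = {}" unfolding XS_def YS_def by auto
  have cXS: "card XS = n" unfolding XS_def by (simp add: card_image inj_on_def)
  have cYS: "card YS = n" unfolding YS_def by (simp add: card_image inj_on_def)
  have finV: "finite V" unfolding VXY XS_def YS_def by simp
  have cV: "card V = 2 * n" unfolding VXY using disj cXS cYS
    by (simp add: card_Un_disjoint XS_def YS_def)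
  have bij: "bij_betw f V {1..int (2 * n)}" and
    ms: "image_mset w (mset_set V) = mset (map (\<lambda>i. a + int i * d) [0..<2 * n])"
  proof -
    have "bij_betw f V {1..int (card V)} \<and>
     image_mset w (mset_set V) = mset (map (\<lambda>i. a + int i * d) [0..<card V])"
      using lab unfolding distance_antimagic_labeling_def V_def E_def w_def .
    then show "bij_betw f V {1..int (2 * n)}"
     "image_mset w (mset_set V) = mset (map (\<lambda>i. a + int i * d) [0..<2 * n])"
      unfolding cV by simp_all
  qed
  have injf: "inj_on f V" using bij by (rule bij_betw_imp_inj_on)
  have wY: "w (Y i) = f (X i)" if "i < n" for i
  proof -
    have "nbhd V E (Y i) = {X i}"
      unfolding nbhd_def V_def E_def sun_V_def using that
      by (auto elim: sun_E.elims)
    then show ?thesis unfolding w_def vertex_weight_def by simp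
  qed
  have sp_lt: "s i < n" "p i < n" if "i < n" for i
    using that assms(1) unfolding s_def p_def by auto
  have wX: "w (X i) = f (X (s i)) + f (X (p i)) + f (Y i)" if "i < n" for i
  proof -
    have N: "nbhd V E (X i) = {X (s i), X (p i), Y i}"
    proof (rule set_eqI)
      fix v show "v \<in> nbhd V E (X i) \<longleftrightarrow> v \<in> {X (s i), X (p i), Y i}"
      proof (cases v)
        case (X j)
        show ?thesis
        proof (cases "j < n")
          case True
          have "E (X i) (X j) \<longleftrightarrow> j = s i \<or> j = p i"
            unfolding E_def s_def p_def using sunE_XX[OF that True] by simp
          moreover have "X j \<in> V" unfolding V_def sun_V_def using True by simp
          ultimately show ?thesis unfolding nbhd_def X by auto
        next
          case False
          have "X j \<notin> V" unfolding V_def sun_V_def using False by auto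
          moreover have "j \<noteq> s i" "j \<noteq> p i" using False sp_lt[OF that] by auto
          ultimately show ?thesis unfolding nbhd_def X by auto
        qed
      next
        case (Y j)
        then show ?thesis unfolding nbhd_def V_def E_def sun_V_def using that by auto
      qed
    qed
    have "s i \<noteq> p i" using that assms(1) unfolding s_def p_def by auto
    then show ?thesis unfolding w_def vertex_weight_def N by simp
  qed
  have sbij: "bij_betw s {..<n} {..<n}"
    by (rule bij_betw_byWitness[where f'=p]) (use assms(1) in \<open>auto simp: s_def p_def\<close>)
  have pbij: "bij_betw p {..<n} {..<n}"
    by (rule bij_betw_byWitness[where f'=s]) (use assms(1) in \<open>auto simp: s_def p_def\<close>)
  define Sx where "Sx = (\<Sum>i<n. f (X i))"
  define Sy where "Sy = (\<Sum>i<n. f (Y i))"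
  have ss: "(\<Sum>i<n. f (X (s i))) = Sx" unfolding Sx_def
    using sum.reindex_bij_betw[OF sbij, of "\<lambda>i. f (X i)"] by simp
  have ps: "(\<Sum>i<n. f (X (p i))) = Sx" unfolding Sx_def
    using sum.reindex_bij_betw[OF pbij, of "\<lambda>i. f (X i)"] by simp
  have sumXS: "sum g XS = (\<Sum>i<n. g (X i))" for g :: "sun_vertex \<Rightarrow> int"
    unfolding XS_def by (subst sum.reindex) (auto simp: inj_on_def)
  have sumYS: "sum g YS = (\<Sum>i<n. g (Y i))" for g :: "sun_vertex \<Rightarrow> int"
    unfolding YS_def by (subst sum.reindex) (auto simp: inj_on_def)
  have sumV: "sum g V = (\<Sum>i<n. g (X i)) + (\<Sum>i<n. g (Y i))" for g :: "sun_vertex \<Rightarrow> int"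
    unfolding VXY using disj sumXS sumYS
    by (subst sum.union_disjoint) (auto simp: XS_def YS_def)
  have tot1: "sum w V = 3 * Sx + Sy"
  proof -
    have "sum w V = (\<Sum>i<n. w (X i)) + (\<Sum>i<n. w (Y i))" by (rule sumV)
    also have "(\<Sum>i<n. w (X i)) = (\<Sum>i<n. f (X (s i)) + f (X (p i)) + f (Y i))"
      by (rule sum.cong) (auto simp: wX)
    also have "\<dots> = Sx + Sx + Sy" using ss ps by (simp add: sum.distrib Sy_def)
    also have "(\<Sum>i<n. w (Y i)) = Sx" unfolding Sx_def by (rule sum.cong) (auto simp: wY)
    finally show ?thesis by simp
  qed
  have fV: "f ` V = {1..int (2 * n)}" using bij by (rule bij_betw_imp_surj_on)
  have tot2: "2 * (Sx + Sy) = 2 * int n * (2 * int n + 1)"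
  proof -
    have "Sx + Sy = sum f V" using sumV[of f] Sx_def Sy_def by simp
    also have "\<dots> = sum id (f ` V)" using injf by (simp add: sum.reindex)
    also have "\<dots> = \<Sum>{1..int (2 * n)}" using fV by simp
    finally have "Sx + Sy = \<Sum>{1..int (2 * n)}" .
    moreover have "\<Sum>{1..int (2 * n)} = (int (2*n) * (int (2*n) + 1) - 1 * (1 - 1)) div 2"
      using assms(1) by (subst Sum_Icc_int) auto
    ultimately show ?thesis by simp
  qed
  have tot3: "sum w V = (\<Sum>k<2*n. a + int k * d)"
  proof -
    have "sum w V = sum_mset (image_mset w (mset_set V))" by (rule sum_unfold_sum_mset)
    also have "\<dots> = sum_list (map (\<lambda>i. a + int i * d) [0..<2 * n])"
      unfolding ms by (rule sum_mset_sum_list)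
    also have "\<dots> = (\<Sum>k<2*n. a + int k * d)"
      by (simp add: sum_set_upt_conv_sum_list_nat[symmetric] atLeast0LessThan)
    finally show ?thesis .
  qed
  have tot4: "(\<Sum>k<2*n. a + int k * d) * 2 = 2 * (2 * int n) * a + d * (2 * int n) * (2 * int n - 1)"
  proof -
    have "(\<Sum>k<2*n. a + int k * d) = int (2*n) * a + d * (\<Sum>k<2*n. int k)"
      by (simp add: sum.distrib sum_distrib_left sum_distrib_right mult.commute)
    moreover define S where "S = (\<Sum>k<2*n. int k)"
    ultimately have e1: "(\<Sum>k<2*n. a + int k * d) * 2 = 2 * (2 * int n) * a + d * (2 * S)"
      by (simp add: algebra_simps)
    have h: "2 * S = 2 * int n * (2 * int n - 1)" using gauss2[of "2*n"] unfolding S_def by simp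
    show ?thesis unfolding e1 h by (simp add: algebra_simps)
  qed
  have memb: "f (X i) \<in> (\<lambda>k. a + int k * d) ` {..<2*n}" if "i < n" for i
  proof -
    have "Y i \<in> V" unfolding V_def sun_V_def using that by simp
    then have "w (Y i) \<in># image_mset w (mset_set V)" using finV by simp
    then have "w (Y i) \<in> set (map (\<lambda>i. a + int i * d) [0..<2 * n])" unfolding ms by simp
    then show ?thesis using wY[OF that] by auto
  qed
  show False
  proof (cases "d = 0")
    case True
    have "f (X 0) = a" "f (X 1) = a" using memb[of 0] memb[of 1] assms True by auto
    moreover have "X 0 \<in> V" "X 1 \<in> V" unfolding V_def sun_V_def using assms by auto
    ultimately have "X 0 = X 1" using inj_onD[OF injf] by metis
    then show False by simp
  next
    case False
    then have dpos: "d > 0" using assms by simp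
    define g where "g = (\<lambda>k::nat. a + int k * d)"
    have ginj: "inj g" unfolding g_def inj_def using dpos by simp
    define L where "L = f ` XS"
    define K where "K = {k. k < 2*n \<and> g k \<in> L}"
    have LK: "L = g ` K"
    proof
      show "g ` K \<subseteq> L" unfolding K_def by auto
      show "L \<subseteq> g ` K"
      proof
        fix y assume "y \<in> L"
        then obtain i where i: "i < n" "y = f (X i)" unfolding L_def XS_def by auto
        then obtain k where k: "k < 2 * n" "y = g k" using memb[OF i(1)] unfolding g_def by auto
        then have "k \<in> K" unfolding K_def using \<open>y \<in> L\<close> by simp
        then show "y \<in> g ` K" using k by simp
      qed
    qed
    have "inj_on f XS" using injf VXY by (auto intro: inj_on_subset)
    then have cL: "card L = n" unfolding L_def using cXS by (simp add: card_image)
    have gK: "inj_on g K" using ginj by (simp add: inj_on_def inj_def)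
    have finK: "finite K" unfolding K_def by simp
    have cK: "card K = n" using cL LK gK by (simp add: card_image)
    have SxL: "Sx = sum id L"
      unfolding Sx_def L_def using injf sumXS[of f]
      by (subst sum.reindex) (auto simp: VXY inj_on_subset)
    also have "\<dots> = sum g K" unfolding LK using gK by (simp add: sum.reindex)
    also have "\<dots> = int n * a + d * int (\<Sum>K)"
      unfolding g_def using cK by (simp add: sum.distrib sum_distrib_left mult.commute)
    finally have SxK: "Sx = int n * a + d * int (\<Sum>K)" .
    have lb: "int n * (int n - 1) \<le> 2 * int (\<Sum>K)"
    proof -
      have "card K * (card K - 1) \<le> 2 * \<Sum>K" by (rule sum_card_lb[OF finK])
      then have "n * (n - 1) \<le> 2 * \<Sum>K" using cK by simp
      then have "int (n * (n - 1)) \<le> int (2 * \<Sum>K)" by (simp only: of_nat_le_iff)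
      then show ?thesis using assms(1) by (simp add: of_nat_diff)
    qed
    have key: "4 * Sx + 2 * int n * (2 * int n + 1) = 2 * (2 * int n) * a + d * (2 * int n) * (2 * int n - 1)"
    proof -
      have "4 * Sx + 2 * int n * (2 * int n + 1) = 4 * Sx + 2 * (Sx + Sy)" using tot2 by simp
      also have "\<dots> = sum w V * 2" using tot1 by simp
      also have "\<dots> = (\<Sum>k<2*n. a + int k * d) * 2" using tot3 by simp
      finally show ?thesis using tot4 by simp
    qed
    have k1: "4*Sx + 4*(int n*int n) + 2*int n = 4*(int n*a) + 4*(d*int n*int n) - 2*(d*int n)"
      using key by (simp add: algebra_simps)
    have "d * (int n * (int n - 1)) \<le> d * (2 * int (\<Sum>K))"
      using lb dpos by (simp add: mult_left_mono)
    then have k3: "d*int n*int n - d*int n \<le> 2*(d*int(\<Sum>K))" by (simp add: algebra_simps)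
    have k2: "4*Sx = 4*(int n*a) + 4*(d*int(\<Sum>K))" using SxK by simp
    have "2*(int n*int n) + int n \<le> d*int n*int n" using k1 k2 k3 by linarith
    then have "int n * (2 * int n + 1) \<le> int n * (d * int n)" by (simp add: algebra_simps)
    then have "2 * int n + 1 \<le> d * int n" using assms(1) by simp
    then have d3: "d \<ge> 3"
    proof -
      assume h: "2 * int n + 1 \<le> d * int n"
      { assume "d \<le> 2"
        then have "d * int n \<le> 2 * int n" by (simp add: mult_right_mono)
        then have False using h by linarith }
      then show ?thesis by force
    qed
    have Kne: "K \<noteq> {}" using cK assms(1) by auto
    define m where "m = Min K"
    define M where "M = Max K"
    have mK: "m \<in> K" "M \<in> K" using Kne finK m_def M_def by auto
    have KmM: "K \<subseteq> {m..M}" using finK m_def M_def by auto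
    have mM: "m \<le> M" using KmM mK by auto
    from KmM have "card K \<le> card {m..M}" by (intro card_mono) simp_all
    then have "n \<le> Suc M - m" using cK by simp
    then have span: "int n - 1 \<le> int M - int m" using mM by linarith
    have Lsub: "L \<subseteq> {1..int (2 * n)}" unfolding L_def using fV VXY by auto
    have "g m \<ge> 1" "g M \<le> 2 * int n" using mK LK Lsub by auto
    then have "(int M - int m) * d \<le> 2 * int n - 1" unfolding g_def by (simp add: algebra_simps)
    moreover have "(int n - 1) * 3 \<le> (int M - int m) * d"
      using span d3 assms(1) by (intro mult_mono) auto
    ultimately have "(int n - 1) * 3 \<le> 2 * int n - 1" by (rule order_trans[rotated])
    then have "3 * int n - 3 \<le> 2 * int n - 1" by (simp add: algebra_simps)
    then show False using assms(1) by linarith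
  qed
qed

end
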